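(* Let $A=(\Sigma,\mathcal{M},Q,q_0,X,I,E,r)$ be a weighted timed Büchi automaton (WTBA) and $c\in\mathbb{N}$. Let $N$ be the maximum constant appearing in any invariant $I(q)$, $q\in Q$, or in any guard $g$ of an edge $(q,\ell,M,g,R,q')\in E$. Then there exists a WTBA $\bar A=(\Sigma\cup\{\epsilon\},\mathcal{M},Q,q_0,X,\bar I,\bar E,r)$ (with $\epsilon\notin\Sigma$ a new letter) such that (1) $v(x)\le N+2$ for all $x\in X$ and all states $(q,v)$ of $[\![\bar A]\!]$, and (2) there exists a $c$-feasible Büchi accepted (infinite) run in $[\![A]\!]$ if and only if there exists a $c$-feasible Büchi accepted (infinite) run in $[\![\bar A]\!]$.
   Context: Weighted Büchi automata (WBA): a structure $(\Sigma,\mathcal{M},S,s_0,T)$ with alphabet $\Sigma$, finite color set $\mathcal{M}$, state set $S$, initial state $s_0$, and transitions $T\subseteq S\times\Sigma\times 2^{\mathcal{M}}\times\mathbb{R}\times S$; a transition $(s,\ell,M,w,s')$ has letter $\ell$, color set $M$, weight $w$. A run is a finite or infinite sequence of consecutive transitions $s_1\to s_2\to\cdots$. A weak upper bound $b\in\mathbb{N}$ is fixed throughout. For initial credit $c$ and run with weights $w_1,w_2,\dots$, accumulated weights are $e_1=\min(b,c)$, $e_{i+1}=\min(b,e_i+w_i)$; the run is $c$-feasible if all $e_i\ge 0$. An infinite run is Büchi accepted if every color in $\mathcal{M}$ occurs in the color sets of infinitely many of its transitions. Clocks: for a finite set $X$ of clocks, clock constraints $\Phi(X)$ are given by $\phi::=x\bowtie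 k\mid\phi_1\wedge\phi_2$ with $x\in X$, $k\in\mathbb{Z}$, ${\bowtie}\in\{\le,<,\ge,>,=\}$. A clock valuation is $v:X\to\mathbb{R}_{\ge0}$; $v_0(x)=0$ for all $x$; $(v+d)(x)=v(x)+d$; for $R\in(\mathbb{N}\cup\{\bot\})^X$, $v[R](x)=v(x)$ if $R(x)=\bot$ and $v[R](x)=R(x)$ otherwise. $v\models\phi$ means $\phi$ holds when each $x$ is replaced by $v(x)$. A WTBA is $A=(\Sigma,\mathcal{M},Q,q_0,X,I,E,r)$ with finite alphabet $\Sigma$, finite color set $\mathcal{M}$, finite location set $Q$, initial location $q_0$, finite clock set $X$, invariants $I:Q\to\Phi(X)$, finite edge set $E\subseteq Q\times\Sigma\times2^{\mathcal{M}}\times\Phi(X)\times(\mathbb{N}\cup\{\bot\})^X\times Q$ (edge $(q,\ell,M,g,R,q')$ with guard $g$ and reset $R$), and weight-rates $r:Q\to\mathbb{Z}$. Its semantics $[\![A]\!]$ is the WBA $(\Sigma\cup\mathbb{R}_{\ge0},\mathcal{M},S,s_0,T)$ with $S=\{(q,v): v\models I(q)\}$, $s_0=(q_0,v_0)$, and transitions: delays $(q,v)\xrightarrow{d,w}_\emptyset(q,v+d)$ for $(q,v)\in S$, $d\in\mathbb{R}_{\ge0}$ with $v+d'\models I(q)$ for all $d'\in[0,d]$, and $w=r(q)d$; switches $(q,v)\xrightarrow{\ell,0}_M(q',v')$ for each edge $(q,\ell,M,g,R,q')\in E$ with $v\models g$, $v'=v[R]$, $v'\models I(q')$. *)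

theory Defs
  imports Complex_Main "HOL-Library.Infinite_Set"
begin

datatype cmp = CLe | CLt | CGe | CGt | CEq

datatype 'c cc = CAtom 'c cmp int | CAnd "'c cc" "'c cc"

fun cmp_sem :: "cmp \<Rightarrow> real \<Rightarrow> real \<Rightarrow> bool" where
  "cmp_sem CLe a b = (a \<le> b)"
| "cmp_sem CLt a b = (a < b)"
| "cmp_sem CGe a b = (a \<ge> b)"
| "cmp_sem CGt a b = (a > b)"
| "cmp_sem CEq a b = (a = b)"

fun cc_sat :: "('c \<Rightarrow> real) \<Rightarrow> 'c cc \<Rightarrow> bool" where
  "cc_sat v (CAtom x r k) = cmp_sem r (v x) (real_of_int k)"
| "cc_sat v (CAnd p q) = (cc_sat v p \<and> cc_sat v q)"

fun cc_clocks :: "'c cc \<Rightarrow> 'c set" where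
  "cc_clocks (CAtom x r k) = {x}"
| "cc_clocks (CAnd p q) = cc_clocks p \<union> cc_clocks q"

fun cc_consts :: "'c cc \<Rightarrow> int set" where
  "cc_consts (CAtom x r k) = {k}"
| "cc_consts (CAnd p q) = cc_consts p \<union> cc_consts q"

text \<open>Resets: \<open>None\<close> plays the role of \<bottom>.\<close>
definition reset_val :: "('c \<Rightarrow> real) \<Rightarrow> ('c \<Rightarrow> nat option) \<Rightarrow> 'c \<Rightarrow> real" where
  "reset_val v R x = (case R x of None \<Rightarrow> v x | Some n \<Rightarrow> real n)"

record ('l, 'm, 'st) wba =
  wba_alph :: "'l set"
  wba_colors :: "'m set"
  wba_states :: "'st set"
  wba_init :: "'st"
  wba_trans :: "('st \<times> 'l \<times> 'm set \<times> real \<times> 'st) set"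

definition tr_src :: "'st \<times> 'l \<times> 'm set \<times> real \<times> 'st \<Rightarrow> 'st" where
  "tr_src t = (case t of (s, l, M, w, s') \<Rightarrow> s)"
definition tr_col :: "'st \<times> 'l \<times> 'm set \<times> real \<times> 'st \<Rightarrow> 'm set" where
  "tr_col t = (case t of (s, l, M, w, s') \<Rightarrow> M)"
definition tr_weight :: "'st \<times> 'l \<times> 'm set \<times> real \<times> 'st \<Rightarrow> real" where
  "tr_weight t = (case t of (s, l, M, w, s') \<Rightarrow> w)"
definition tr_tgt :: "'st \<times> 'l \<times> 'm set \<times> real \<times> 'st \<Rightarrow> 'st" where
  "tr_tgt t = (case t of (s, l, M, w, s') \<Rightarrow> s')"

definition inf_run :: "('l, 'm, 'st) wba \<Rightarrow> (nat \<Rightarrow> 'st \<times> 'l \<times> 'm set \<times> real \<times> 'st) \<Rightarrow> bool" where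
  "inf_run W \<rho> \<longleftrightarrow> (\<forall>i. \<rho> i \<in> wba_trans W) \<and> tr_src (\<rho> 0) = wba_init W
     \<and> (\<forall>i. tr_tgt (\<rho> i) = tr_src (\<rho> (Suc i)))"

text \<open>Accumulated weights with weak upper bound b and initial credit c;
  \<open>acc_weight b c \<rho> i\<close> is e_(i+1) of the paper.\<close>
fun acc_weight :: "nat \<Rightarrow> nat \<Rightarrow> (nat \<Rightarrow> 'st \<times> 'l \<times> 'm set \<times> real \<times> 'st) \<Rightarrow> nat \<Rightarrow> real" where
  "acc_weight b c \<rho> 0 = min (real b) (real c)"
| "acc_weight b c \<rho> (Suc i) = min (real b) (acc_weight b c \<rho> i + tr_weight (\<rho> i))"

definition feasible :: "nat \<Rightarrow> nat \<Rightarrow> (nat \<Rightarrow> 'st \<times> 'l \<times> 'm set \<times> real \<times> 'st) \<Rightarrow> bool" where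
  "feasible b c \<rho> \<longleftrightarrow> (\<forall>i. acc_weight b c \<rho> i \<ge> 0)"

definition buchi_acc :: "('l, 'm, 'st) wba \<Rightarrow> (nat \<Rightarrow> 'st \<times> 'l \<times> 'm set \<times> real \<times> 'st) \<Rightarrow> bool" where
  "buchi_acc W \<rho> \<longleftrightarrow> (\<forall>m \<in> wba_colors W. \<exists>\<^sub>\<infinity> i. m \<in> tr_col (\<rho> i))"

record ('s, 'm, 'q, 'c) wtba =
  ta_alph :: "'s set"
  ta_colors :: "'m set"
  ta_locs :: "'q set"
  ta_init :: "'q"
  ta_clocks :: "'c set"
  ta_inv :: "'q \<Rightarrow> 'c cc"
  ta_edges :: "('q \<times> 's \<times> 'm set \<times> 'c cc \<times> ('c \<Rightarrow> nat option) \<times> 'q) set"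
  ta_rate :: "'q \<Rightarrow> int"

definition wf_wtba :: "('s, 'm, 'q, 'c) wtba \<Rightarrow> bool" where
  "wf_wtba A \<longleftrightarrow> finite (ta_alph A) \<and> finite (ta_colors A) \<and> finite (ta_locs A)
    \<and> ta_init A \<in> ta_locs A \<and> finite (ta_clocks A)
    \<and> (\<forall>q \<in> ta_locs A. cc_clocks (ta_inv A q) \<subseteq> ta_clocks A)
    \<and> finite (ta_edges A)
    \<and> (\<forall>(q, l, M, g, R, q') \<in> ta_edges A. q \<in> ta_locs A \<and> l \<in> ta_alph A
          \<and> M \<subseteq> ta_colors A \<and> cc_clocks g \<subseteq> ta_clocks A
          \<and> (\<forall>x. x \<notin> ta_clocks A \<longrightarrow> R x = None) \<and> q' \<in> ta_locs A)"

definition ta_states :: "('s, 'm, 'q, 'c) wtba \<Rightarrow> ('q \<times> ('c \<Rightarrow> real)) set" where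
  "ta_states A = {(q, v). q \<in> ta_locs A \<and> (\<forall>x. 0 \<le> v x) \<and> cc_sat v (ta_inv A q)}"

text \<open>Letters of the semantics: \<open>Inl l\<close> for l in Sigma, \<open>Inr d\<close> for delays d.\<close>
definition ta_trans :: "('s, 'm, 'q, 'c) wtba \<Rightarrow>
    (('q \<times> ('c \<Rightarrow> real)) \<times> ('s + real) \<times> 'm set \<times> real \<times> ('q \<times> ('c \<Rightarrow> real))) set" where
  "ta_trans A =
     {((q, v), Inr d, {}, real_of_int (ta_rate A q) * d, (q, \<lambda>x. v x + d)) | q v d.
        (q, v) \<in> ta_states A \<and> 0 \<le> d \<and> (\<forall>d' \<in> {0..d}. cc_sat (\<lambda>x. v x + d') (ta_inv A q))}
   \<union> {((q, v), Inl l, M, 0, (q', reset_val v R)) | q v l M g R q'.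
        (q, l, M, g, R, q') \<in> ta_edges A \<and> (q, v) \<in> ta_states A \<and> cc_sat v g
        \<and> (q', reset_val v R) \<in> ta_states A}"

definition sem :: "('s, 'm, 'q, 'c) wtba \<Rightarrow> ('s + real, 'm, 'q \<times> ('c \<Rightarrow> real)) wba" where
  "sem A = \<lparr> wba_alph = Inl ` ta_alph A \<union> Inr ` {d. 0 \<le> d}, wba_colors = ta_colors A,
             wba_states = ta_states A, wba_init = (ta_init A, \<lambda>x. 0), wba_trans = ta_trans A \<rparr>"

text \<open>Maximal constant in invariants and guards (0 if there is none / all are negative).\<close>
definition max_const :: "('s, 'm, 'q, 'c) wtba \<Rightarrow> int" where
  "max_const A = Max ({0} \<union> (\<Union>q \<in> ta_locs A. cc_consts (ta_inv A q))
                        \<union> (\<Union>(q, l, M, g, R, q') \<in> ta_edges A. cc_consts g))"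

end

theory Submission
  imports Defs
begin


fun path :: "('st \<times> 'l \<times> 'm set \<times> real \<times> 'st) set \<Rightarrow> 'st \<Rightarrow> ('st \<times> 'l \<times> 'm set \<times> real \<times> 'st) list \<Rightarrow> 'st \<Rightarrow> bool" where
  "path T s [] s' = (s = s')"
| "path T s (t # ts) s' = (t \<in> T \<and> tr_src t = s \<and> path T (tr_tgt t) ts s')"

lemma path_append: "path T s (xs @ ys) s'' = (\<exists>s'. path T s xs s' \<and> path T s' ys s'')"
  by (induction xs arbitrary: s) auto

lemma path_set: "path T s ts s' \<Longrightarrow> u \<in> set ts \<Longrightarrow> u \<in> T"
  by (induction ts arbitrary: s) auto

lemma path_src: "path T s ts s' \<Longrightarrow> ts \<noteq> [] \<Longrightarrow> tr_src (ts!0) = s"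
  by (cases ts) auto

lemma path_last: "path T s ts s' \<Longrightarrow> ts \<noteq> [] \<Longrightarrow> tr_tgt (ts ! (length ts - 1)) = s'"
proof (induction ts arbitrary: s)
  case Nil then show ?case by simp
next
  case (Cons t ts)
  then show ?case by (cases ts) auto
qed

lemma path_consec: "path T s ts s' \<Longrightarrow> Suc j < length ts \<Longrightarrow> tr_tgt (ts!j) = tr_src (ts ! Suc j)"
proof (induction ts arbitrary: s j)
  case Nil then show ?case by simp
next
  case (Cons t ts)
  then show ?case by (cases j) (auto intro: path_src[symmetric])
qed

definition cpos :: "(nat \<Rightarrow> 'a list) \<Rightarrow> nat \<Rightarrow> nat" where "cpos L i = (\<Sum>k<i. length (L k))"
definition cidx :: "(nat \<Rightarrow> 'a list) \<Rightarrow> nat \<Rightarrow> nat" where "cidx L n = (LEAST i. n < cpos L (Suc i))"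
definition cseq :: "(nat \<Rightarrow> 'a list) \<Rightarrow> nat \<Rightarrow> 'a" where "cseq L n = L (cidx L n) ! (n - cpos L (cidx L n))"

lemma cpos_Suc: "cpos L (Suc i) = cpos L i + length (L i)" by (simp add: cpos_def)
lemma cpos_0: "cpos L 0 = 0" by (simp add: cpos_def)

lemma cpos_mono: "i \<le> j \<Longrightarrow> cpos L i \<le> cpos L j"
  unfolding cpos_def by (rule sum_mono2) auto

lemma cpos_ge: "\<forall>i. L i \<noteq> [] \<Longrightarrow> i \<le> cpos L i"
proof (induction i)
  case 0 then show ?case by simp
next
  case (Suc i)
  then have "length (L i) \<ge> 1" by (simp add: Suc_le_eq)
  with Suc show ?case by (simp add: cpos_Suc)
qed

lemma cseq_at: assumes "j < length (L i)" shows "cseq L (cpos L i + j) = L i ! j"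
proof -
  have "cidx L (cpos L i + j) = i" unfolding cidx_def
  proof (rule Least_equality)
    show "cpos L i + j < cpos L (Suc i)" using assms by (simp add: cpos_Suc)
  next
    fix y assume "cpos L i + j < cpos L (Suc y)"
    show "i \<le> y"
    proof (rule ccontr)
      assume "\<not> i \<le> y"
      then have "cpos L (Suc y) \<le> cpos L i" by (intro cpos_mono) auto
      with \<open>cpos L i + j < cpos L (Suc y)\<close> show False by simp
    qed
  qed
  then show ?thesis by (simp add: cseq_def)
qed

lemma cseq_cover: assumes "\<forall>i. L i \<noteq> []" shows "\<exists>i j. j < length (L i) \<and> n = cpos L i + j"
proof -
  define i where "i = cidx L n"
  have ex: "n < cpos L (Suc n)" using cpos_ge[OF assms, of "Suc n"] by simp
  have h1: "n < cpos L (Suc i)" unfolding i_def cidx_def by (rule LeastI, rule ex)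
  have h2: "cpos L i \<le> n"
  proof (cases i)
    case 0 then show ?thesis by (simp add: cpos_0)
  next
    case (Suc m)
    then have "m < i" by simp
    then have "\<not> n < cpos L (Suc m)" unfolding i_def cidx_def by (rule not_less_Least)
    with Suc show ?thesis by simp
  qed
  show ?thesis using h1 h2 by (intro exI[of _ i] exI[of _ "n - cpos L i"]) (auto simp: cpos_Suc)
qed

lemma acc_shift: "acc_weight b c \<rho> (n + j) = foldl (\<lambda>e w. min (real b) (e + w)) (acc_weight b c \<rho> n) (map (\<lambda>k. tr_weight (\<rho> k)) [n..<n+j])"
  by (induction j) auto

lemma acc_le: "acc_weight b c \<rho> i \<le> real b"
  by (cases i) auto

lemma sign_split: assumes "\<forall>w\<in>set ws. \<exists>\<delta>\<ge>0. w = \<sigma>*\<delta>"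
  shows "(0 \<le> \<sigma> \<and> (\<forall>w\<in>set ws. 0 \<le> w)) \<or> (\<sigma> \<le> 0 \<and> (\<forall>w\<in>set ws. w \<le> (0::real)))"
proof (cases "0 \<le> \<sigma>")
  case True then show ?thesis using assms by auto
next
  case False then show ?thesis using assms by (auto simp: mult_nonpos_nonneg)
qed

lemma fold_sign: assumes "\<forall>w\<in>set ws. \<exists>\<delta>\<ge>0. w = \<sigma>*\<delta>" "e \<le> real b"
  shows "foldl (\<lambda>e w. min (real b) (e + w)) e ws = min (real b) (e + sum_list ws)"
  using assms
proof (induction ws arbitrary: e)
  case Nil then show ?case by simp
next
  case (Cons w ws)
  have IH: "foldl (\<lambda>e w. min (real b) (e + w)) (min (real b) (e + w)) ws = min (real b) (min (real b) (e + w) + sum_list ws)"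
    using Cons by auto
  from sign_split[OF Cons.prems(1)] show ?case
  proof
    assume h: "0 \<le> \<sigma> \<and> (\<forall>w\<in>set (w#ws). 0 \<le> w)"
    then have "0 \<le> sum_list ws" by (auto intro: sum_list_nonneg)
    then show ?thesis using IH by auto
  next
    assume h: "\<sigma> \<le> 0 \<and> (\<forall>w\<in>set (w#ws). w \<le> 0)"
    then have "min (real b) (e + w) = e + w" using Cons.prems by auto
    then show ?thesis using IH by (simp add: add.assoc)
  qed
qed

lemma fold_sign_nonneg: assumes "\<forall>w\<in>set ws. \<exists>\<delta>\<ge>0. w = \<sigma>*\<delta>" "0 \<le> e" "e \<le> real b"
  "0 \<le> min (real b) (e + sum_list ws)" "j \<le> length ws"
  shows "0 \<le> foldl (\<lambda>e w. min (real b) (e + w)) e (take j ws)"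
proof -
  have s: "\<forall>w\<in>set (take j ws). \<exists>\<delta>\<ge>0. w = \<sigma>*\<delta>" using assms(1) by (meson in_set_takeD)
  have eq: "sum_list ws = sum_list (take j ws) + sum_list (drop j ws)"
    by (metis append_take_drop_id sum_list_append)
  from sign_split[OF assms(1)] have "0 \<le> e + sum_list (take j ws)"
  proof
    assume "0 \<le> \<sigma> \<and> (\<forall>w\<in>set ws. 0 \<le> w)"
    then have "0 \<le> sum_list (take j ws)" by (auto intro: sum_list_nonneg dest: in_set_takeD)
    then show ?thesis using assms by simp
  next
    assume "\<sigma> \<le> 0 \<and> (\<forall>w\<in>set ws. w \<le> 0)"
    then have "sum_list (drop j ws) \<le> 0" by (auto intro: sum_list_nonpos dest: in_set_dropD)
    then show ?thesis using assms(4) eq by linarith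
  qed
  then show ?thesis using fold_sign[OF s assms(3)] by simp
qed

primrec iter_st :: "(nat \<Rightarrow> 't) \<Rightarrow> ('t \<times> 's \<Rightarrow> 'x \<times> 's) \<Rightarrow> 's \<Rightarrow> nat \<Rightarrow> 's" where
  "iter_st \<rho> F s0 0 = s0"
| "iter_st \<rho> F s0 (Suc i) = snd (F (\<rho> i, iter_st \<rho> F s0 i))"


lemma sim:
  fixes WA :: "('l1, 'm, 's1) wba" and WB :: "('l2, 'm, 's2) wba"
  assumes col: "wba_colors WB = wba_colors WA"
  and init: "\<And>t. t \<in> wba_trans WA \<Longrightarrow> tr_src t = wba_init WA \<Longrightarrow> S (wba_init WA) (wba_init WB)"
  and step: "\<And>t s2. t \<in> wba_trans WA \<Longrightarrow> S (tr_src t) s2 \<Longrightarrow> \<exists>ts s2'. ts \<noteq> [] \<and> path (wba_trans WB) s2 ts s2'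
      \<and> S (tr_tgt t) s2' \<and> (\<exists>\<sigma>. \<forall>u\<in>set ts. \<exists>\<delta>\<ge>0. tr_weight u = \<sigma>*\<delta>)
      \<and> sum_list (map tr_weight ts) = tr_weight t \<and> (\<forall>m\<in>tr_col t. \<exists>u\<in>set ts. m \<in> tr_col u)"
  and run: "inf_run WA \<rho>" "feasible b c \<rho>" "buchi_acc WA \<rho>"
  shows "\<exists>\<rho>'. inf_run WB \<rho>' \<and> feasible b c \<rho>' \<and> buchi_acc WB \<rho>'"
proof -
  define P :: "'s1 \<times> 'l1 \<times> 'm set \<times> real \<times> 's1 \<Rightarrow> 's2 \<Rightarrow> ('s2 \<times> 'l2 \<times> 'm set \<times> real \<times> 's2) list \<times> 's2 \<Rightarrow> bool"
    where "P t s2 r \<longleftrightarrow> (fst r \<noteq> [] \<and> path (wba_trans WB) s2 (fst r) (snd r)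
      \<and> S (tr_tgt t) (snd r) \<and> (\<exists>\<sigma>. \<forall>u\<in>set (fst r). \<exists>\<delta>\<ge>0. tr_weight u = \<sigma>*\<delta>)
      \<and> sum_list (map tr_weight (fst r)) = tr_weight t \<and> (\<forall>m\<in>tr_col t. \<exists>u\<in>set (fst r). m \<in> tr_col u))" for t s2 r
  have "\<forall>p. \<exists>r. fst p \<in> wba_trans WA \<and> S (tr_src (fst p)) (snd p) \<longrightarrow> P (fst p) (snd p) r"
  proof
    fix p
    show "\<exists>r. fst p \<in> wba_trans WA \<and> S (tr_src (fst p)) (snd p) \<longrightarrow> P (fst p) (snd p) r"
    proof (cases "fst p \<in> wba_trans WA \<and> S (tr_src (fst p)) (snd p)")
      case True
      then obtain ts s2' where "ts \<noteq> [] \<and> path (wba_trans WB) (snd p) ts s2'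
      \<and> S (tr_tgt (fst p)) s2' \<and> (\<exists>\<sigma>. \<forall>u\<in>set ts. \<exists>\<delta>\<ge>0. tr_weight u = \<sigma>*\<delta>)
      \<and> sum_list (map tr_weight ts) = tr_weight (fst p) \<and> (\<forall>m\<in>tr_col (fst p). \<exists>u\<in>set ts. m \<in> tr_col u)"
        using step by blast
      then show ?thesis unfolding P_def by (intro exI[of _ "(ts, s2')"]) simp
    qed blast
  qed
  then obtain F where F: "\<And>p. fst p \<in> wba_trans WA \<and> S (tr_src (fst p)) (snd p) \<Longrightarrow> P (fst p) (snd p) (F p)"
    by metis
  define St where "St = iter_st \<rho> F (wba_init WB)"
  define L where "L i = fst (F (\<rho> i, St i))" for i
  have tr: "\<And>i. \<rho> i \<in> wba_trans WA" and src0: "tr_src (\<rho> 0) = wba_init WA"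
    and cons: "\<And>i. tr_tgt (\<rho> i) = tr_src (\<rho> (Suc i))" using run(1) unfolding inf_run_def by auto
  have inv: "S (tr_src (\<rho> i)) (St i) \<and> P (\<rho> i) (St i) (F (\<rho> i, St i))" for i
  proof (induction i)
    case 0
    have "S (tr_src (\<rho> 0)) (St 0)" using init[OF tr src0] src0 by (simp add: St_def)
    then show ?case using F[of "(\<rho> 0, St 0)"] tr by simp
  next
    case (Suc i)
    then have "S (tr_tgt (\<rho> i)) (St (Suc i))" unfolding P_def St_def by simp
    then have "S (tr_src (\<rho> (Suc i))) (St (Suc i))" using cons by simp
    then show ?case using F[of "(\<rho> (Suc i), St (Suc i))"] tr by simp
  qed
  have Lne: "\<forall>i. L i \<noteq> []" using inv unfolding P_def L_def by simp
  have Lpath: "path (wba_trans WB) (St i) (L i) (St (Suc i))" for i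
    using inv[of i] unfolding P_def L_def St_def by simp
  have Lsign: "\<exists>\<sigma>. \<forall>u\<in>set (L i). \<exists>\<delta>\<ge>0. tr_weight u = \<sigma>*\<delta>" for i
    using inv[of i] unfolding P_def L_def by simp
  have Lsum: "sum_list (map tr_weight (L i)) = tr_weight (\<rho> i)" for i
    using inv[of i] unfolding P_def L_def by simp
  have Lcol: "\<forall>m\<in>tr_col (\<rho> i). \<exists>u\<in>set (L i). m \<in> tr_col u" for i
    using inv[of i] unfolding P_def L_def by simp
  define \<rho>' where "\<rho>' = cseq L"
  have at: "j < length (L i) \<Longrightarrow> \<rho>' (cpos L i + j) = L i ! j" for i j
    unfolding \<rho>'_def by (rule cseq_at)
  have run': "inf_run WB \<rho>'"
    unfolding inf_run_def
  proof (intro conjI allI)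
    fix n
    obtain i j where ij: "j < length (L i)" "n = cpos L i + j" using cseq_cover[OF Lne] by blast
    show "\<rho>' n \<in> wba_trans WB" using ij at[OF ij(1)] Lpath[of i] by (auto intro: path_set)
    show "tr_tgt (\<rho>' n) = tr_src (\<rho>' (Suc n))"
    proof (cases "Suc j < length (L i)")
      case True
      then have "\<rho>' (Suc n) = L i ! Suc j" using at[of "Suc j" i] ij by simp
      then show ?thesis using ij at[OF ij(1)] path_consec[OF Lpath True] by simp
    next
      case False
      then have j: "j = length (L i) - 1" using ij by simp
      have "Suc n = cpos L (Suc i) + 0" using ij False by (simp add: cpos_Suc)
      then have "\<rho>' (Suc n) = L (Suc i) ! 0" using at[of 0 "Suc i"] Lne by simp
      then have "tr_src (\<rho>' (Suc n)) = St (Suc i)" using path_src[OF Lpath] Lne by simp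
      moreover have "tr_tgt (\<rho>' n) = St (Suc i)" using ij at[OF ij(1)] j path_last[OF Lpath] Lne by simp
      ultimately show ?thesis by simp
    qed
  next
    have "\<rho>' 0 = L 0 ! 0" using at[of 0 0] Lne by (simp add: cpos_0)
    then show "tr_src (\<rho>' 0) = wba_init WB" using path_src[OF Lpath] Lne by (simp add: St_def)
  qed
  have mapeq: "j \<le> length (L i) \<Longrightarrow> map (\<lambda>k. tr_weight (\<rho>' k)) [cpos L i..<cpos L i + j] = map tr_weight (take j (L i))" for i j
    by (rule nth_equalityI) (auto simp: at)
  have accpos: "acc_weight b c \<rho>' (cpos L i) = acc_weight b c \<rho> i" for i
  proof (induction i)
    case 0 then show ?case by (simp add: cpos_0)
  next
    case (Suc i)
    obtain \<sigma> where s: "\<forall>u\<in>set (map tr_weight (L i)). \<exists>\<delta>\<ge>0. u = \<sigma>*\<delta>" using Lsign[of i] by auto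
    have "acc_weight b c \<rho>' (cpos L (Suc i)) = acc_weight b c \<rho>' (cpos L i + length (L i))"
      by (simp add: cpos_Suc)
    also have "\<dots> = foldl (\<lambda>e w. min (real b) (e + w)) (acc_weight b c \<rho> i) (map tr_weight (L i))"
      using acc_shift[of b c \<rho>' "cpos L i" "length (L i)"] mapeq[of "length (L i)" i] Suc by simp
    also have "\<dots> = min (real b) (acc_weight b c \<rho> i + tr_weight (\<rho> i))"
      using fold_sign[OF s acc_le] Lsum by simp
    finally show ?case by simp
  qed
  have feas': "feasible b c \<rho>'"
    unfolding feasible_def
  proof
    fix n
    obtain i j where ij: "j < length (L i)" "n = cpos L i + j" using cseq_cover[OF Lne] by blast
    obtain \<sigma> where s: "\<forall>u\<in>set (map tr_weight (L i)). \<exists>\<delta>\<ge>0. u = \<sigma>*\<delta>" using Lsign[of i] by auto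
    have a0: "0 \<le> acc_weight b c \<rho> i" and a1: "0 \<le> acc_weight b c \<rho> (Suc i)"
      using run(2) unfolding feasible_def by blast+
    have "acc_weight b c \<rho>' n = foldl (\<lambda>e w. min (real b) (e + w)) (acc_weight b c \<rho> i) (take j (map tr_weight (L i)))"
      using acc_shift[of b c \<rho>' "cpos L i" j] mapeq[of j i] ij accpos[of i] by (simp add: take_map)
    also have "0 \<le> \<dots>"
      by (rule fold_sign_nonneg[OF s a0 acc_le]) (use a1 Lsum ij in auto)
    finally show "0 \<le> acc_weight b c \<rho>' n" .
  qed
  have acc': "buchi_acc WB \<rho>'"
    unfolding buchi_acc_def INFM_nat
  proof (intro ballI allI)
    fix m k assume m: "m \<in> wba_colors WB"
    then have "\<exists>\<^sub>\<infinity> i. m \<in> tr_col (\<rho> i)" using run(3) col unfolding buchi_acc_def by auto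
    then obtain i where i: "i > k" "m \<in> tr_col (\<rho> i)" unfolding INFM_nat by blast
    then obtain u where u: "u \<in> set (L i)" "m \<in> tr_col u" using Lcol by blast
    then obtain j where j: "j < length (L i)" "L i ! j = u" by (meson in_set_conv_nth)
    have "i \<le> cpos L i" using cpos_ge[OF Lne] .
    then show "\<exists>n>k. m \<in> tr_col (\<rho>' n)"
      using at[OF j(1)] j u i by (intro exI[of _ "cpos L i + j"]) auto
  qed
  show ?thesis using run' feas' acc' by blast
qed



lemma tr_simps[simp]: "tr_src (s, l, M, w, s') = s" "tr_tgt (s, l, M, w, s') = s'"
  "tr_weight (s, l, M, w, s') = w" "tr_col (s, l, M, w, s') = M"
  by (simp_all add: tr_src_def tr_tgt_def tr_weight_def tr_col_def)

definition trunc :: "nat \<Rightarrow> ('c \<Rightarrow> nat option) \<Rightarrow> ('c \<Rightarrow> nat option)" where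
  "trunc K R = (\<lambda>x. map_option (\<lambda>n. min n (K+1)) (R x))"
definition rx :: "nat \<Rightarrow> 'c \<Rightarrow> ('c \<Rightarrow> nat option)" where
  "rx K y = (\<lambda>x. if x = y then Some (K+1) else None)"
definition binv :: "nat \<Rightarrow> 'c list \<Rightarrow> 'c cc \<Rightarrow> 'c cc" where
  "binv K xs \<phi> = foldr (\<lambda>x p. CAnd (CAtom x CLe (int K + 2)) p) xs \<phi>"

definition mkbar :: "('s, 'm, 'q, 'c) wtba \<Rightarrow> nat \<Rightarrow> 'c list \<Rightarrow> ('s option, 'm, 'q, 'c) wtba" where
  "mkbar A K xs = \<lparr>ta_alph = Some ` ta_alph A \<union> {None}, ta_colors = ta_colors A, ta_locs = ta_locs A,
     ta_init = ta_init A, ta_clocks = ta_clocks A, ta_inv = (\<lambda>q. binv K xs (ta_inv A q)),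
     ta_edges = (\<lambda>(q, l, M, g, R, q'). (q, Some l, M, g, trunc K R, q')) ` ta_edges A
       \<union> (\<lambda>(q, y). (q, None, {}, CAtom y CGe (int K + 1), rx K y, q)) ` (ta_locs A \<times> ta_clocks A),
     ta_rate = ta_rate A\<rparr>"

lemma cc_sat_binv: "cc_sat w (binv K xs \<phi>) = ((\<forall>x\<in>set xs. w x \<le> real K + 2) \<and> cc_sat w \<phi>)"
  by (induction xs) (auto simp: binv_def)

lemma cc_clocks_binv: "cc_clocks (binv K xs \<phi>) = set xs \<union> cc_clocks \<phi>"
  by (induction xs) (auto simp: binv_def)

lemma finite_cc_consts: "finite (cc_consts \<phi>)"
  by (induction \<phi>) auto

lemma close_sat:
  assumes "\<forall>x\<in>X. v x = w x \<or> (real_of_int N < v x \<and> real_of_int N < w x)"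
    "cc_clocks \<phi> \<subseteq> X" "\<forall>k\<in>cc_consts \<phi>. k \<le> N"
  shows "cc_sat v \<phi> = cc_sat w \<phi>"
  using assms
proof (induction \<phi>)
  case (CAtom x r k)
  then have k: "real_of_int k \<le> real_of_int N" by simp
  from CAtom have "v x = w x \<or> (real_of_int N < v x \<and> real_of_int N < w x)" by simp
  then show ?case using k by (cases r) auto
next
  case (CAnd p q)
  then show ?case by simp
qed

lemma reset_val_rx: "reset_val w (rx K y) = (\<lambda>x. if x = y then real K + 1 else w x)"
  by (auto simp: reset_val_def rx_def)

lemma reset_val_nonneg: "\<forall>x. 0 \<le> w x \<Longrightarrow> 0 \<le> reset_val w R x"
  by (auto simp: reset_val_def split: option.splits)

lemma states_iff: "(q, v) \<in> ta_states B \<longleftrightarrow> q \<in> ta_locs B \<and> (\<forall>x. 0 \<le> v x) \<and> cc_sat v (ta_inv B q)"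
  by (simp add: ta_states_def)

lemma delay_tr: "(q, v) \<in> ta_states B \<Longrightarrow> 0 \<le> d \<Longrightarrow> (\<forall>d'\<in>{0..d}. cc_sat (\<lambda>x. v x + d') (ta_inv B q))
  \<Longrightarrow> ((q, v), Inr d, {}, real_of_int (ta_rate B q) * d, (q, \<lambda>x. v x + d)) \<in> ta_trans B"
  unfolding ta_trans_def by blast

lemma edge_tr: "(q, l, M, g, R, q') \<in> ta_edges B \<Longrightarrow> (q, v) \<in> ta_states B \<Longrightarrow> cc_sat v g
  \<Longrightarrow> (q', reset_val v R) \<in> ta_states B
  \<Longrightarrow> ((q, v), Inl l, M, 0, (q', reset_val v R)) \<in> ta_trans B"
  unfolding ta_trans_def by blast

lemma tr_cases:
  assumes "t \<in> ta_trans B"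
  obtains (delay) q v d where "t = ((q, v), Inr d, {}, real_of_int (ta_rate B q) * d, (q, \<lambda>x. v x + d))"
      "(q, v) \<in> ta_states B" "0 \<le> d" "\<forall>d'\<in>{0..d}. cc_sat (\<lambda>x. v x + d') (ta_inv B q)"
  | (edge) q v l M g R q' where "t = ((q, v), Inl l, M, 0, (q', reset_val v R))"
      "(q, l, M, g, R, q') \<in> ta_edges B" "(q, v) \<in> ta_states B" "cc_sat v g" "(q', reset_val v R) \<in> ta_states B"
  using assms unfolding ta_trans_def by blast

lemma src_states: "t \<in> ta_trans B \<Longrightarrow> tr_src t \<in> ta_states B"
  by (erule tr_cases) auto

lemma single_sign: "\<exists>\<sigma>. \<forall>u\<in>set [t]. \<exists>\<delta>\<ge>0. tr_weight u = \<sigma>*\<delta>"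
  by (rule exI[of _ "tr_weight t"]) (auto intro!: exI[of _ "1::real"])

lemma sum_zero: "(\<forall>u\<in>set ts. f u = (0::real)) \<Longrightarrow> sum_list (map f ts) = 0"
  by (induction ts) auto

locale L = fixes A :: "('s, 'm, 'q, 'c) wtba" assumes wf: "wf_wtba A"
begin

definition "K = nat (max_const A)"
definition "xs = (SOME xs. set xs = ta_clocks A)"
definition "Ab = mkbar A K xs"
definition close :: "('c \<Rightarrow> real) \<Rightarrow> ('c \<Rightarrow> real) \<Rightarrow> bool" where
  "close v w \<longleftrightarrow> (\<forall>x\<in>ta_clocks A. v x = w x \<or> (real_of_int (max_const A) < v x \<and> real_of_int (max_const A) < w x))"
definition rel where
  "rel s1 s2 \<longleftrightarrow> fst s1 = fst s2 \<and> s1 \<in> ta_states A \<and> s2 \<in> ta_states Ab \<and> close (snd s1) (snd s2)"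

lemma wfA: "finite (ta_alph A)" "finite (ta_colors A)" "finite (ta_locs A)"
    "ta_init A \<in> ta_locs A" "finite (ta_clocks A)"
    "\<And>q. q \<in> ta_locs A \<Longrightarrow> cc_clocks (ta_inv A q) \<subseteq> ta_clocks A"
    "finite (ta_edges A)"
  using wf unfolding wf_wtba_def by auto

lemma wfE: assumes "(q, l, M, g, R, q') \<in> ta_edges A"
  shows "q \<in> ta_locs A" "l \<in> ta_alph A" "M \<subseteq> ta_colors A" "cc_clocks g \<subseteq> ta_clocks A"
    "\<And>x. x \<notin> ta_clocks A \<Longrightarrow> R x = None" "q' \<in> ta_locs A"
  using wf assms unfolding wf_wtba_def by fastforce+

lemma set_xs: "set xs = ta_clocks A"
  unfolding xs_def using finite_list[OF wfA(5)] by (rule someI_ex)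

lemma finite_consts: "finite ({0} \<union> (\<Union>q \<in> ta_locs A. cc_consts (ta_inv A q))
                        \<union> (\<Union>(q, l, M, g, R, q') \<in> ta_edges A. cc_consts g))"
  using wfA(3,7) by (auto simp: finite_cc_consts split: prod.splits)

lemma N_nonneg: "0 \<le> max_const A"
  unfolding max_const_def by (rule Max_ge[OF finite_consts]) simp

lemma K_real: "real K = real_of_int (max_const A)"
  using N_nonneg by (simp add: K_def)

lemma K_int: "int K = max_const A"
  using N_nonneg by (simp add: K_def)

lemma consts_inv: "q \<in> ta_locs A \<Longrightarrow> k \<in> cc_consts (ta_inv A q) \<Longrightarrow> k \<le> max_const A"
  unfolding max_const_def by (rule Max_ge[OF finite_consts]) auto

lemma consts_guard: "(q, l, M, g, R, q') \<in> ta_edges A \<Longrightarrow> k \<in> cc_consts g \<Longrightarrow> k \<le> max_const A"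
  unfolding max_const_def by (rule Max_ge[OF finite_consts]) fastforce

lemma states_Ab: "(q, w) \<in> ta_states Ab \<longleftrightarrow> q \<in> ta_locs A \<and> (\<forall>x. 0 \<le> w x)
    \<and> (\<forall>x\<in>ta_clocks A. w x \<le> real K + 2) \<and> cc_sat w (ta_inv A q)"
  by (auto simp: states_iff Ab_def mkbar_def cc_sat_binv set_xs)

lemma close_sat_inv: "q \<in> ta_locs A \<Longrightarrow> close v w \<Longrightarrow> cc_sat v (ta_inv A q) = cc_sat w (ta_inv A q)"
  unfolding close_def by (rule close_sat) (use wfA(6)[of q] consts_inv[of q] in auto)

lemma close_sat_guard: "(q, l, M, g, R, q') \<in> ta_edges A \<Longrightarrow> close v w \<Longrightarrow> cc_sat v g = cc_sat w g"
  unfolding close_def by (rule close_sat) (use wfE(4)[of q l M g R q'] consts_guard[of q l M g R q'] in auto)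

lemma close_shift: "close v w \<Longrightarrow> 0 \<le> d \<Longrightarrow> close (\<lambda>x. v x + d) (\<lambda>x. w x + d)"
  unfolding close_def by force

lemma close_reset: "close v w \<Longrightarrow> close (reset_val v R) (reset_val w (trunc K R))"
  unfolding close_def
proof (intro ballI)
  fix x assume c: "\<forall>x\<in>ta_clocks A. v x = w x \<or> (real_of_int (max_const A) < v x \<and> real_of_int (max_const A) < w x)"
    and x: "x \<in> ta_clocks A"
  show "reset_val v R x = reset_val w (trunc K R) x \<or>
         real_of_int (max_const A) < reset_val v R x \<and> real_of_int (max_const A) < reset_val w (trunc K R) x"
  proof (cases "R x")
    case None then show ?thesis using c x by (simp add: reset_val_def trunc_def)
  next
    case (Some n)
    show ?thesis
    proof (cases "n \<le> K + 1")
      case True then show ?thesis using Some by (simp add: reset_val_def trunc_def)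
    next
      case False
      then have "real n > real K + 1" by simp
      then show ?thesis using Some False K_real by (simp add: reset_val_def trunc_def)
    qed
  qed
qed

lemma close_eps: "close v w \<Longrightarrow> w y \<ge> real K + 1 \<Longrightarrow> close v (reset_val w (rx K y))"
  unfolding close_def reset_val_rx using K_real by force


lemma rate_Ab[simp]: "ta_rate Ab = ta_rate A" by (simp add: Ab_def mkbar_def)

lemma eps_edge: "q \<in> ta_locs A \<Longrightarrow> y \<in> ta_clocks A \<Longrightarrow>
   (q, None, {}, CAtom y CGe (int K + 1), rx K y, q) \<in> ta_edges Ab"
  by (auto simp: Ab_def mkbar_def)

lemma real_edge: "(q, l, M, g, R, q') \<in> ta_edges A \<Longrightarrow>
   (q, Some l, M, g, trunc K R, q') \<in> ta_edges Ab"
  by (force simp: Ab_def mkbar_def)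

lemma eps_norm:
  assumes "set ys \<subseteq> ta_clocks A" "(q, v) \<in> ta_states A" "(q, w) \<in> ta_states Ab" "close v w"
  shows "\<exists>ts w'. path (ta_trans Ab) (q, w) ts (q, w') \<and> (\<forall>u\<in>set ts. tr_weight u = 0 \<and> tr_col u = {})
     \<and> (q, w') \<in> ta_states Ab \<and> close v w' \<and> (\<forall>x\<in>set ys. w' x \<le> real K + 1) \<and> (\<forall>x. x \<notin> set ys \<longrightarrow> w' x = w x)"
  using assms
proof (induction ys arbitrary: w)
  case Nil
  then show ?case by (intro exI[of _ "[]"] exI[of _ w]) auto
next
  case (Cons y ys)
  show ?case
  proof (cases "w y \<le> real K + 1")
    case True
    obtain ts w' where h: "path (ta_trans Ab) (q, w) ts (q, w') \<and> (\<forall>u\<in>set ts. tr_weight u = 0 \<and> tr_col u = {})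
     \<and> (q, w') \<in> ta_states Ab \<and> close v w' \<and> (\<forall>x\<in>set ys. w' x \<le> real K + 1) \<and> (\<forall>x. x \<notin> set ys \<longrightarrow> w' x = w x)"
      using Cons.IH[OF _ Cons.prems(2-4)] Cons.prems(1) by auto
    show ?thesis using h True by (intro exI[of _ ts] exI[of _ w']) auto
  next
    case False
    define w1 where "w1 = reset_val w (rx K y)"
    have y: "y \<in> ta_clocks A" using Cons by auto
    have q: "q \<in> ta_locs A" using Cons by (simp add: states_iff)
    have c1: "close v w1" unfolding w1_def using close_eps[OF Cons(5)] False by simp
    have s1: "(q, w1) \<in> ta_states Ab"
      unfolding states_Ab
    proof (intro conjI)
      show "\<forall>x. 0 \<le> w1 x" unfolding w1_def using Cons(4) by (simp add: states_Ab reset_val_nonneg)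
      show "\<forall>x\<in>ta_clocks A. w1 x \<le> real K + 2" unfolding w1_def reset_val_rx using Cons(4) by (auto simp: states_Ab)
      have "cc_sat v (ta_inv A q)" using Cons(3) by (simp add: states_iff)
      then show "cc_sat w1 (ta_inv A q)" using close_sat_inv[OF q c1] by simp
    qed (rule q)
    have t: "((q, w), Inl None, {}, 0, (q, w1)) \<in> ta_trans Ab"
      unfolding w1_def
      by (rule edge_tr[OF eps_edge[OF q y] Cons(4)]) (use False s1 w1_def in auto)
    obtain ts w' where h: "path (ta_trans Ab) (q, w1) ts (q, w') \<and> (\<forall>u\<in>set ts. tr_weight u = 0 \<and> tr_col u = {})
     \<and> (q, w') \<in> ta_states Ab \<and> close v w' \<and> (\<forall>x\<in>set ys. w' x \<le> real K + 1) \<and> (\<forall>x. x \<notin> set ys \<longrightarrow> w' x = w1 x)"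
      using Cons.IH[of w1] Cons(2,3) s1 c1 by auto
    show ?thesis
      using h t by (intro exI[of _ "((q, w), Inl None, {}, 0, (q, w1)) # ts"] exI[of _ w'])
        (auto simp: w1_def reset_val_rx)
  qed
qed

lemma chunk:
  assumes "0 \<le> \<delta>" "\<delta> \<le> 1" "(q, v) \<in> ta_states A" "(q, w) \<in> ta_states Ab" "close v w"
    "\<forall>d'\<in>{0..\<delta>}. cc_sat (\<lambda>x. v x + d') (ta_inv A q)"
  shows "\<exists>ts w'. ts \<noteq> [] \<and> path (ta_trans Ab) (q, w) ts (q, w')
     \<and> (\<forall>u\<in>set ts. tr_col u = {} \<and> (\<exists>\<delta>'\<ge>0. tr_weight u = real_of_int (ta_rate A q) * \<delta>'))
     \<and> sum_list (map tr_weight ts) = real_of_int (ta_rate A q) * \<delta>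
     \<and> (q, \<lambda>x. v x + \<delta>) \<in> ta_states A \<and> (q, w') \<in> ta_states Ab \<and> close (\<lambda>x. v x + \<delta>) w'"
proof -
  have q: "q \<in> ta_locs A" using assms(3) by (simp add: states_iff)
  obtain ts1 w1 where h: "path (ta_trans Ab) (q, w) ts1 (q, w1)" "\<forall>u\<in>set ts1. tr_weight u = 0 \<and> tr_col u = {}"
     "(q, w1) \<in> ta_states Ab" "close v w1" "\<forall>x\<in>set xs. w1 x \<le> real K + 1"
    using eps_norm[of xs q v w] assms set_xs by auto
  have inv: "\<forall>d'\<in>{0..\<delta>}. cc_sat (\<lambda>x. w1 x + d') (ta_inv Ab q)"
  proof
    fix d' assume d': "d' \<in> {0..\<delta>}"
    have "cc_sat (\<lambda>x. w1 x + d') (ta_inv A q)"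
      using close_sat_inv[OF q close_shift[OF h(4), of d']] assms(6) d' by auto
    moreover have "\<forall>x\<in>set xs. w1 x + d' \<le> real K + 2" using h(5) d' assms(2) by force
    ultimately show "cc_sat (\<lambda>x. w1 x + d') (ta_inv Ab q)"
      by (simp add: Ab_def mkbar_def cc_sat_binv)
  qed
  have t: "((q, w1), Inr \<delta>, {}, real_of_int (ta_rate A q) * \<delta>, (q, \<lambda>x. w1 x + \<delta>)) \<in> ta_trans Ab"
    using delay_tr[OF h(3) assms(1) inv] by simp
  have sA: "(q, \<lambda>x. v x + \<delta>) \<in> ta_states A"
    using assms(1,3,6) by (auto simp: states_iff add_nonneg_nonneg)
  have sAb: "(q, \<lambda>x. w1 x + \<delta>) \<in> ta_states Ab"
    using inv h(3) assms(1) by (auto simp: states_iff add_nonneg_nonneg)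
  have sum: "sum_list (map tr_weight ts1) = 0" using h(2) by (intro sum_zero) auto
  show ?thesis
    using h t sA sAb sum close_shift[OF h(4) assms(1)] assms(1)
    by (intro exI[of _ "ts1 @ [((q, w1), Inr \<delta>, {}, real_of_int (ta_rate A q) * \<delta>, (q, \<lambda>x. w1 x + \<delta>))]"]
        exI[of _ "\<lambda>x. w1 x + \<delta>"]) (auto simp: path_append)
qed


lemma delay_fwd:
  "\<forall>d v w. 0 \<le> d \<longrightarrow> d \<le> real n \<longrightarrow> (q, v) \<in> ta_states A \<longrightarrow> (q, w) \<in> ta_states Ab \<longrightarrow> close v w \<longrightarrow>
    (\<forall>d'\<in>{0..d}. cc_sat (\<lambda>x. v x + d') (ta_inv A q)) \<longrightarrow>
    (\<exists>ts w'. ts \<noteq> [] \<and> path (ta_trans Ab) (q, w) ts (q, w')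
     \<and> (\<forall>u\<in>set ts. tr_col u = {} \<and> (\<exists>\<delta>'\<ge>0. tr_weight u = real_of_int (ta_rate A q) * \<delta>'))
     \<and> sum_list (map tr_weight ts) = real_of_int (ta_rate A q) * d
     \<and> (q, \<lambda>x. v x + d) \<in> ta_states A \<and> (q, w') \<in> ta_states Ab \<and> close (\<lambda>x. v x + d) w')"
proof (induction n)
  case 0
  show ?case
  proof (intro allI impI)
    fix d v w assume a: "0 \<le> d" "d \<le> real 0" "(q, v) \<in> ta_states A" "(q, w) \<in> ta_states Ab" "close v w"
      "\<forall>d'\<in>{0..d}. cc_sat (\<lambda>x. v x + d') (ta_inv A q)"
    then show "\<exists>ts w'. ts \<noteq> [] \<and> path (ta_trans Ab) (q, w) ts (q, w')
     \<and> (\<forall>u\<in>set ts. tr_col u = {} \<and> (\<exists>\<delta>'\<ge>0. tr_weight u = real_of_int (ta_rate A q) * \<delta>'))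
     \<and> sum_list (map tr_weight ts) = real_of_int (ta_rate A q) * d
     \<and> (q, \<lambda>x. v x + d) \<in> ta_states A \<and> (q, w') \<in> ta_states Ab \<and> close (\<lambda>x. v x + d) w'"
      using chunk[of d q v w] by simp
  qed
next
  case (Suc n)
  show ?case
  proof (intro allI impI)
    fix d v w assume a: "0 \<le> d" "d \<le> real (Suc n)" "(q, v) \<in> ta_states A" "(q, w) \<in> ta_states Ab" "close v w"
      "\<forall>d'\<in>{0..d}. cc_sat (\<lambda>x. v x + d') (ta_inv A q)"
    show "\<exists>ts w'. ts \<noteq> [] \<and> path (ta_trans Ab) (q, w) ts (q, w')
     \<and> (\<forall>u\<in>set ts. tr_col u = {} \<and> (\<exists>\<delta>'\<ge>0. tr_weight u = real_of_int (ta_rate A q) * \<delta>'))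
     \<and> sum_list (map tr_weight ts) = real_of_int (ta_rate A q) * d
     \<and> (q, \<lambda>x. v x + d) \<in> ta_states A \<and> (q, w') \<in> ta_states Ab \<and> close (\<lambda>x. v x + d) w'"
    proof (cases "d \<le> 1")
      case True then show ?thesis using chunk[of d q v w] a by simp
    next
      case False
      obtain ts1 w1 where h1: "ts1 \<noteq> []" "path (ta_trans Ab) (q, w) ts1 (q, w1)"
       "\<forall>u\<in>set ts1. tr_col u = {} \<and> (\<exists>\<delta>'\<ge>0. tr_weight u = real_of_int (ta_rate A q) * \<delta>')"
       "sum_list (map tr_weight ts1) = real_of_int (ta_rate A q) * 1"
       "(q, \<lambda>x. v x + 1) \<in> ta_states A" "(q, w1) \<in> ta_states Ab" "close (\<lambda>x. v x + 1) w1"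
        using chunk[of 1 q v w] a False by auto
      have inv2: "\<forall>d'\<in>{0..d - 1}. cc_sat (\<lambda>x. v x + 1 + d') (ta_inv A q)"
      proof
        fix d' assume "d' \<in> {0..d - 1}"
        then have "1 + d' \<in> {0..d}" by auto
        then have "cc_sat (\<lambda>x. v x + (1 + d')) (ta_inv A q)" using a(6) by blast
        then show "cc_sat (\<lambda>x. v x + 1 + d') (ta_inv A q)" by (simp add: add.assoc)
      qed
      obtain ts2 w2 where h2: "ts2 \<noteq> []" "path (ta_trans Ab) (q, w1) ts2 (q, w2)"
       "\<forall>u\<in>set ts2. tr_col u = {} \<and> (\<exists>\<delta>'\<ge>0. tr_weight u = real_of_int (ta_rate A q) * \<delta>')"
       "sum_list (map tr_weight ts2) = real_of_int (ta_rate A q) * (d - 1)"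
       "(q, \<lambda>x. v x + 1 + (d - 1)) \<in> ta_states A" "(q, w2) \<in> ta_states Ab" "close (\<lambda>x. v x + 1 + (d - 1)) w2"
        using Suc.IH[rule_format, of "d - 1" "\<lambda>x. v x + 1" w1] a False h1 inv2 by auto
      have e: "(\<lambda>x. v x + 1 + (d - 1)) = (\<lambda>x. v x + d)" by auto
      show ?thesis
        using h1 h2 e by (intro exI[of _ "ts1 @ ts2"] exI[of _ w2]) (auto simp: path_append algebra_simps)
    qed
  qed
qed

lemma step_fwd:
  assumes t: "t \<in> ta_trans A" and r: "rel (tr_src t) s2"
  shows "\<exists>ts s2'. ts \<noteq> [] \<and> path (ta_trans Ab) s2 ts s2'
      \<and> rel (tr_tgt t) s2' \<and> (\<exists>\<sigma>. \<forall>u\<in>set ts. \<exists>\<delta>\<ge>0. tr_weight u = \<sigma>*\<delta>)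
      \<and> sum_list (map tr_weight ts) = tr_weight t \<and> (\<forall>m\<in>tr_col t. \<exists>u\<in>set ts. m \<in> tr_col u)"
  using t
proof (cases rule: tr_cases)
  case (delay q v d)
  obtain w where s2: "s2 = (q, w)" using r delay by (cases s2) (auto simp: rel_def)
  have a: "(q, w) \<in> ta_states Ab" "close v w" using r delay s2 by (auto simp: rel_def)
  have "d \<le> real (nat \<lceil>d\<rceil>)" by linarith
  then obtain ts w' where h: "ts \<noteq> []" "path (ta_trans Ab) (q, w) ts (q, w')"
     "\<forall>u\<in>set ts. tr_col u = {} \<and> (\<exists>\<delta>'\<ge>0. tr_weight u = real_of_int (ta_rate A q) * \<delta>')"
     "sum_list (map tr_weight ts) = real_of_int (ta_rate A q) * d"
     "(q, \<lambda>x. v x + d) \<in> ta_states A" "(q, w') \<in> ta_states Ab" "close (\<lambda>x. v x + d) w'"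
    using delay_fwd[of "nat \<lceil>d\<rceil>" q, rule_format, of d v w] delay a by auto
  show ?thesis
    using h delay s2 by (intro exI[of _ ts] exI[of _ "(q, w')"]) (auto simp: rel_def)
next
  case (edge q v l M g R q')
  obtain w where s2: "s2 = (q, w)" using r edge by (cases s2) (auto simp: rel_def)
  have a: "(q, w) \<in> ta_states Ab" "close v w" using r edge s2 by (auto simp: rel_def)
  define w' where "w' = reset_val w (trunc K R)"
  have c': "close (reset_val v R) w'" unfolding w'_def by (rule close_reset[OF a(2)])
  have q': "q' \<in> ta_locs A" using wfE(6)[OF edge(2)] .
  have sat: "cc_sat w g" using close_sat_guard[OF edge(2) a(2)] edge(4) by simp
  have s': "(q', w') \<in> ta_states Ab"
    unfolding states_Ab
  proof (intro conjI)
    show "\<forall>x. 0 \<le> w' x" unfolding w'_def using a(1) by (simp add: states_Ab reset_val_nonneg)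
    show "\<forall>x\<in>ta_clocks A. w' x \<le> real K + 2"
      using a(1) by (auto simp: w'_def reset_val_def trunc_def states_Ab split: option.splits)
    have "cc_sat (reset_val v R) (ta_inv A q')" using edge(5) by (simp add: states_iff)
    then show "cc_sat w' (ta_inv A q')" using close_sat_inv[OF q' c'] by simp
  qed (rule q')
  have tt: "((q, w), Inl (Some l), M, 0, (q', w')) \<in> ta_trans Ab"
    unfolding w'_def by (rule edge_tr[OF real_edge[OF edge(2)] a(1) sat]) (use s' w'_def in simp)
  show ?thesis
    using tt s' c' edge s2 by (intro exI[of _ "[((q, w), Inl (Some l), M, 0, (q', w'))]"] exI[of _ "(q', w')"])
      (auto simp: rel_def single_sign)
qed

lemma step_bwd:
  assumes t: "t \<in> ta_trans Ab" and r: "rel s1 (tr_src t)"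
  shows "\<exists>ts s1'. ts \<noteq> [] \<and> path (ta_trans A) s1 ts s1'
      \<and> rel s1' (tr_tgt t) \<and> (\<exists>\<sigma>. \<forall>u\<in>set ts. \<exists>\<delta>\<ge>0. tr_weight u = \<sigma>*\<delta>)
      \<and> sum_list (map tr_weight ts) = tr_weight t \<and> (\<forall>m\<in>tr_col t. \<exists>u\<in>set ts. m \<in> tr_col u)"
  using t
proof (cases rule: tr_cases)
  case (delay q w d)
  obtain v where s1: "s1 = (q, v)" using r delay by (cases s1) (auto simp: rel_def)
  have a: "(q, v) \<in> ta_states A" "close v w" using r delay s1 by (auto simp: rel_def)
  have q: "q \<in> ta_locs A" using a(1) by (simp add: states_iff)
  have inv: "\<forall>d'\<in>{0..d}. cc_sat (\<lambda>x. v x + d') (ta_inv A q)"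
  proof
    fix d' assume d': "d' \<in> {0..d}"
    then have "cc_sat (\<lambda>x. w x + d') (ta_inv Ab q)" using delay by blast
    then have "cc_sat (\<lambda>x. w x + d') (ta_inv A q)" by (simp add: Ab_def mkbar_def cc_sat_binv)
    then show "cc_sat (\<lambda>x. v x + d') (ta_inv A q)" using close_sat_inv[OF q close_shift[OF a(2), of d']] d' by auto
  qed
  have tt: "((q, v), Inr d, {}, real_of_int (ta_rate A q) * d, (q, \<lambda>x. v x + d)) \<in> ta_trans A"
    by (rule delay_tr[OF a(1) delay(3) inv])
  have sA: "(q, \<lambda>x. v x + d) \<in> ta_states A"
    using a(1) delay(3) inv by (auto simp: states_iff add_nonneg_nonneg)
  have sAb: "(q, \<lambda>x. w x + d) \<in> ta_states Ab"
    using delay by (auto simp: states_iff add_nonneg_nonneg)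
  show ?thesis
    using tt sA sAb delay s1 close_shift[OF a(2) delay(3)]
    by (intro exI[of _ "[((q, v), Inr d, {}, real_of_int (ta_rate A q) * d, (q, \<lambda>x. v x + d))]"]
        exI[of _ "(q, \<lambda>x. v x + d)"]) (auto simp: rel_def single_sign)
next
  case (edge q w a M g R' q')
  obtain v where s1: "s1 = (q, v)" using r edge by (cases s1) (auto simp: rel_def)
  have av: "(q, v) \<in> ta_states A" "close v w" using r edge s1 by (auto simp: rel_def)
  have q: "q \<in> ta_locs A" using av(1) by (simp add: states_iff)
  from edge(2) have "(\<exists>l R. (q, l, M, g, R, q') \<in> ta_edges A \<and> a = Some l \<and> R' = trunc K R)
     \<or> (\<exists>y. y \<in> ta_clocks A \<and> a = None \<and> M = {} \<and> g = CAtom y CGe (int K + 1) \<and> R' = rx K y \<and> q' = q)"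
    by (auto simp: Ab_def mkbar_def)
  then show ?thesis
  proof
    assume "\<exists>l R. (q, l, M, g, R, q') \<in> ta_edges A \<and> a = Some l \<and> R' = trunc K R"
    then obtain l R where e: "(q, l, M, g, R, q') \<in> ta_edges A" "a = Some l" "R' = trunc K R" by blast
    have q': "q' \<in> ta_locs A" using wfE(6)[OF e(1)] .
    have c': "close (reset_val v R) (reset_val w R')" unfolding e(3) by (rule close_reset[OF av(2)])
    have sat: "cc_sat v g" using close_sat_guard[OF e(1) av(2)] edge(4) by simp
    have s': "(q', reset_val v R) \<in> ta_states A"
      unfolding states_iff
    proof (intro conjI)
      show "\<forall>x. 0 \<le> reset_val v R x" using av(1) by (simp add: states_iff reset_val_nonneg)
      have "cc_sat (reset_val w R') (ta_inv A q')" using edge(5) by (simp add: states_Ab)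
      then show "cc_sat (reset_val v R) (ta_inv A q')" using close_sat_inv[OF q' c'] by simp
    qed (rule q')
    have tt: "((q, v), Inl l, M, 0, (q', reset_val v R)) \<in> ta_trans A"
      by (rule edge_tr[OF e(1) av(1) sat s'])
    show ?thesis
      using tt s' c' edge s1 by (intro exI[of _ "[((q, v), Inl l, M, 0, (q', reset_val v R))]"]
          exI[of _ "(q', reset_val v R)"]) (auto simp: rel_def single_sign)
  next
    assume "\<exists>y. y \<in> ta_clocks A \<and> a = None \<and> M = {} \<and> g = CAtom y CGe (int K + 1) \<and> R' = rx K y \<and> q' = q"
    then obtain y where e: "y \<in> ta_clocks A" "a = None" "M = {}" "g = CAtom y CGe (int K + 1)" "R' = rx K y" "q' = q"
      by blast
    have gy: "w y \<ge> real K + 1" using edge(4) e(4) by simp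
    have c': "close v (reset_val w R')" unfolding e(5) by (rule close_eps[OF av(2) gy])
    have inv: "\<forall>d'\<in>{0..0::real}. cc_sat (\<lambda>x. v x + d') (ta_inv A q)" using av(1) by (simp add: states_iff)
    have tt: "((q, v), Inr 0, {}, real_of_int (ta_rate A q) * 0, (q, \<lambda>x. v x + 0)) \<in> ta_trans A"
      by (rule delay_tr[OF av(1) _ inv]) simp
    have ev: "(\<lambda>x. v x + 0) = v" by simp
    show ?thesis
      using tt c' edge s1 e av(1) ev by (intro exI[of _ "[((q, v), Inr 0, {}, real_of_int (ta_rate A q) * 0, (q, \<lambda>x. v x + 0))]"]
          exI[of _ "(q, v)"]) (auto simp: rel_def single_sign)
  qed
qed

lemma wf_Ab: "wf_wtba Ab"
  unfolding wf_wtba_def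
proof (intro conjI)
  show "\<forall>q\<in>ta_locs Ab. cc_clocks (ta_inv Ab q) \<subseteq> ta_clocks Ab"
    using wfA(6) by (auto simp: Ab_def mkbar_def cc_clocks_binv set_xs)
  show "finite (ta_edges Ab)" using wfA by (simp add: Ab_def mkbar_def)
  show "\<forall>(q, l, M, g, R, q')\<in>ta_edges Ab. q \<in> ta_locs Ab \<and> l \<in> ta_alph Ab \<and> M \<subseteq> ta_colors Ab \<and>
        cc_clocks g \<subseteq> ta_clocks Ab \<and> (\<forall>x. x \<notin> ta_clocks Ab \<longrightarrow> R x = None) \<and> q' \<in> ta_locs Ab"
  proof (clarify)
    fix q l M g R q' assume e: "(q, l, M, g, R, q') \<in> ta_edges Ab"
    then have "(\<exists>l0 R0. (q, l0, M, g, R0, q') \<in> ta_edges A \<and> l = Some l0 \<and> R = trunc K R0)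
     \<or> (\<exists>y. y \<in> ta_clocks A \<and> q \<in> ta_locs A \<and> l = None \<and> M = {} \<and> g = CAtom y CGe (int K + 1) \<and> R = rx K y \<and> q' = q)"
      by (auto simp: Ab_def mkbar_def)
    then show "q \<in> ta_locs Ab \<and> l \<in> ta_alph Ab \<and> M \<subseteq> ta_colors Ab \<and>
        cc_clocks g \<subseteq> ta_clocks Ab \<and> (\<forall>x. x \<notin> ta_clocks Ab \<longrightarrow> R x = None) \<and> q' \<in> ta_locs Ab"
    proof
      assume "\<exists>l0 R0. (q, l0, M, g, R0, q') \<in> ta_edges A \<and> l = Some l0 \<and> R = trunc K R0"
      then obtain l0 R0 where h: "(q, l0, M, g, R0, q') \<in> ta_edges A" "l = Some l0" "R = trunc K R0" by blast
      show ?thesis using wfE[OF h(1)] h by (auto simp: Ab_def mkbar_def trunc_def)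
    next
      assume "\<exists>y. y \<in> ta_clocks A \<and> q \<in> ta_locs A \<and> l = None \<and> M = {} \<and> g = CAtom y CGe (int K + 1) \<and> R = rx K y \<and> q' = q"
      then show ?thesis by (auto simp: Ab_def mkbar_def rx_def)
    qed
  qed
qed (use wfA in \<open>auto simp: Ab_def mkbar_def\<close>)

end

theorem lemma4:
  fixes A :: "('s, 'm, 'q, 'c) wtba" and b c :: nat
  assumes "wf_wtba A"
  shows "\<exists>Abar :: ('s option, 'm, 'q, 'c) wtba.
           wf_wtba Abar
         \<and> ta_alph Abar = Some ` ta_alph A \<union> {None}
         \<and> ta_colors Abar = ta_colors A \<and> ta_locs Abar = ta_locs A
         \<and> ta_init Abar = ta_init A \<and> ta_clocks Abar = ta_clocks A
         \<and> ta_rate Abar = ta_rate A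
         \<and> (\<forall>(q, v) \<in> wba_states (sem Abar). \<forall>x \<in> ta_clocks A.
               v x \<le> real_of_int (max_const A) + 2)
         \<and> ((\<exists>\<rho>. inf_run (sem A) \<rho> \<and> feasible b c \<rho> \<and> buchi_acc (sem A) \<rho>)
            \<longleftrightarrow> (\<exists>\<rho>. inf_run (sem Abar) \<rho> \<and> feasible b c \<rho> \<and> buchi_acc (sem Abar) \<rho>))"
proof -
  interpret L A by unfold_locales (rule assms)
  have bound: "\<forall>(q, v) \<in> wba_states (sem Ab). \<forall>x \<in> ta_clocks A. v x \<le> real_of_int (max_const A) + 2"
    using K_real by (auto simp: sem_def states_Ab)
  have init0: "rel (ta_init A, \<lambda>x. 0) (ta_init A, \<lambda>x. 0)" if "(ta_init A, \<lambda>x. 0) \<in> ta_states A"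
  proof -
    have "(ta_init A, \<lambda>x. 0) \<in> ta_states Ab" unfolding states_Ab using that by (simp add: states_iff)
    then show ?thesis using that by (simp add: rel_def close_def)
  qed
  have init1: "(ta_init A, \<lambda>x. 0) \<in> ta_states A" if "(ta_init A, \<lambda>x. 0) \<in> ta_states Ab"
    using that unfolding states_Ab by (simp add: states_iff)
  have fw: "\<exists>\<rho>'. inf_run (sem Ab) \<rho>' \<and> feasible b c \<rho>' \<and> buchi_acc (sem Ab) \<rho>'"
    if "inf_run (sem A) \<rho>" "feasible b c \<rho>" "buchi_acc (sem A) \<rho>" for \<rho>
  proof (rule sim[where WA = "sem A" and WB = "sem Ab" and S = rel, OF _ _ _ that])
    show "wba_colors (sem Ab) = wba_colors (sem A)" by (simp add: sem_def Ab_def mkbar_def)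
    show "rel (wba_init (sem A)) (wba_init (sem Ab))" if "t \<in> wba_trans (sem A)" "tr_src t = wba_init (sem A)" for t
      using src_states[of t A] that init0 by (simp add: sem_def Ab_def mkbar_def)
    show "\<exists>ts s2'. ts \<noteq> [] \<and> path (wba_trans (sem Ab)) s2 ts s2' \<and> rel (tr_tgt t) s2' \<and>
           (\<exists>\<sigma>. \<forall>u\<in>set ts. \<exists>\<delta>\<ge>0. tr_weight u = \<sigma> * \<delta>) \<and>
           sum_list (map tr_weight ts) = tr_weight t \<and> (\<forall>m\<in>tr_col t. \<exists>u\<in>set ts. m \<in> tr_col u)"
      if "t \<in> wba_trans (sem A)" "rel (tr_src t) s2" for t s2
      using step_fwd[of t s2] that by (simp add: sem_def)
  qed
  have bw: "\<exists>\<rho>'. inf_run (sem A) \<rho>' \<and> feasible b c \<rho>' \<and> buchi_acc (sem A) \<rho>'"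
    if "inf_run (sem Ab) \<rho>" "feasible b c \<rho>" "buchi_acc (sem Ab) \<rho>" for \<rho>
  proof (rule sim[where WA = "sem Ab" and WB = "sem A" and S = "\<lambda>s2 s1. rel s1 s2", OF _ _ _ that])
    show "wba_colors (sem A) = wba_colors (sem Ab)" by (simp add: sem_def Ab_def mkbar_def)
    show "rel (wba_init (sem A)) (wba_init (sem Ab))" if "t \<in> wba_trans (sem Ab)" "tr_src t = wba_init (sem Ab)" for t
      using src_states[of t Ab] that init0 init1 by (simp add: sem_def Ab_def mkbar_def)
    show "\<exists>ts s2'. ts \<noteq> [] \<and> path (wba_trans (sem A)) s2 ts s2' \<and> rel s2' (tr_tgt t) \<and>
           (\<exists>\<sigma>. \<forall>u\<in>set ts. \<exists>\<delta>\<ge>0. tr_weight u = \<sigma> * \<delta>) \<and>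
           sum_list (map tr_weight ts) = tr_weight t \<and> (\<forall>m\<in>tr_col t. \<exists>u\<in>set ts. m \<in> tr_col u)"
      if "t \<in> wba_trans (sem Ab)" "rel s2 (tr_src t)" for t s2
      using step_bwd[of t s2] that by (simp add: sem_def)
  qed
  show ?thesis
    apply (rule exI[of _ Ab])
    using wf_Ab bound fw bw by (auto simp: Ab_def mkbar_def)
qed

end
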